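(* Let $\delta_1,\delta_2>0$, and let $\mathcal C_{\delta_1}$ and $\mathcal C_{\delta_2}$ be finite nonempty families of cubes from the $\delta_1$-grid and the $\delta_2$-grid of $\mathbb R^n$ respectively. Let $[L,X_f]$ and $[L,Y_f]$ be random affine contractions on $\mathbb R^n$ (with the same random linear part $L$) such that $X_f$ is uniformly distributed on $\bigcup\mathcal C_{\delta_1}$ and $Y_f$ is uniformly distributed on $\bigcup\mathcal C_{\delta_2}$. Then for every $m\in M_{\delta_1}=\{k\in\mathbb Z^n:C_{\delta_1}(k)\in\mathcal C_{\delta_1}\}$, the distribution of $\mathcal M^\#[L,Y_f]$ (computed with respect to $\delta_2$) equals the conditional distribution of $\mathcal M^\#[L,X_f]$ (computed with respect to $\delta_1$) given $X_f\in C_{\delta_1}(m)$.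
   Context: Let $d$ be a metric on $\mathbb R^n$ induced by a norm $\|\cdot\|$. For $\delta>0$ and $m\in\mathbb Z^n$, $C_\delta(m)=\prod_{j=1}^n[(m_j-\tfrac12)\delta,(m_j+\tfrac12)\delta)$; the $\delta$-grid is the set of all these cubes; $\mathcal D^n(\delta)=\{\delta m:m\in\mathbb Z^n\}$. The $\delta$-roundoff of $x$ is $\tilde x=\delta m$ where $x\in C_\delta(m)$, and of a map $w$ is $\tilde w(\tilde x)=\widetilde{w(\tilde x)}$ on $\mathcal D^n(\delta)$. A random affine contraction $[L,Z]$ is a pair of independent random variables, $Z\in\mathbb R^n$ and $L$ an $n\times n$ random matrix with induced operator norm $\|L\|<1$, viewed as the map $x\mapsto L(x-Z)+Z$. For nonempty $C$ with $\tilde w(C)\subset C$, $\Lambda\subset C$ is absorbing for $\tilde w$ in $C$ if every orbit of a point of $C$ eventually stays in $\Lambda$; the minimal absorbing set is the intersection of all absorbing sets in $\mathcal D^n(\delta)$ (it exists and is finite for roundoffs of contractions). $\mathcal M^\#[L,Z]$ denotes the cardinality of the minimal absorbing set of the roundoff of $[L,Z]$; here for $[L,X_f]$ the $\delta_1$-roundoff and for $[L,Y_f]$ the $\delta_2$-roundoff is used. *)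

theory Defs
  imports "HOL-Probability.Probability"
begin

definition is_norm :: "(real^'n \<Rightarrow> real) \<Rightarrow> bool" where
  "is_norm N \<longleftrightarrow> (\<forall>x. 0 \<le> N x) \<and> (\<forall>x. N x = 0 \<longleftrightarrow> x = 0)
     \<and> (\<forall>c x. N (c *\<^sub>R x) = \<bar>c\<bar> * N x) \<and> (\<forall>x y. N (x + y) \<le> N x + N y)"

definition op_norm :: "(real^'n \<Rightarrow> real) \<Rightarrow> real^'n^'n \<Rightarrow> real" where
  "op_norm N A = Sup {N (A *v x) / N x | x. x \<noteq> 0}"

definition grid_cube :: "real \<Rightarrow> int^'n \<Rightarrow> (real^'n) set" where
  "grid_cube \<delta> m = {x. \<forall>j. (of_int (m$j) - 1/2) * \<delta> \<le> x$j \<and> x$j < (of_int (m$j) + 1/2) * \<delta>}"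

definition grid_pt :: "real \<Rightarrow> int^'n \<Rightarrow> real^'n" where
  "grid_pt \<delta> m = (\<chi> j. \<delta> * of_int (m$j))"

definition grid :: "real \<Rightarrow> (real^'n) set" where
  "grid \<delta> = range (grid_pt \<delta>)"

definition roundoff :: "real \<Rightarrow> real^'n \<Rightarrow> real^'n" where
  "roundoff \<delta> x = grid_pt \<delta> (THE m. x \<in> grid_cube \<delta> m)"

definition roundoff_map :: "real \<Rightarrow> (real^'n \<Rightarrow> real^'n) \<Rightarrow> real^'n \<Rightarrow> real^'n" where
  "roundoff_map \<delta> w p = roundoff \<delta> (w p)"

definition absorbing :: "(real^'n) set \<Rightarrow> (real^'n \<Rightarrow> real^'n) \<Rightarrow> (real^'n) set \<Rightarrow> bool" where
  "absorbing C f \<Lambda> \<longleftrightarrow> \<Lambda> \<subseteq> C \<and> (\<forall>x\<in>C. \<exists>N. \<forall>k\<ge>N. (f ^^ k) x \<in> \<Lambda>)"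

definition min_absorbing :: "real \<Rightarrow> (real^'n \<Rightarrow> real^'n) \<Rightarrow> (real^'n) set" where
  "min_absorbing \<delta> w = \<Inter> {\<Lambda>. absorbing (grid \<delta>) (roundoff_map \<delta> w) \<Lambda>}"

definition aff_map :: "real^'n^'n \<Rightarrow> real^'n \<Rightarrow> real^'n \<Rightarrow> real^'n" where
  "aff_map A z x = A *v (x - z) + z"

definition Mcard :: "real \<Rightarrow> real^'n^'n \<Rightarrow> real^'n \<Rightarrow> nat" where
  "Mcard \<delta> A z = card (min_absorbing \<delta> (aff_map A z))"

end

theory Submission
  imports Defs
begin



lemma cube_iff:
  assumes "\<delta> > 0"
  shows "x \<in> grid_cube \<delta> m \<longleftrightarrow> m = (\<chi> j. \<lfloor>x$j/\<delta> + 1/2\<rfloor>)"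
proof -
  have "((of_int (m$j) - 1/2) * \<delta> \<le> x$j \<and> x$j < (of_int (m$j) + 1/2) * \<delta>) \<longleftrightarrow>
        m$j = \<lfloor>x$j/\<delta> + 1/2\<rfloor>" for j
  proof -
    have "((of_int (m$j) - 1/2) * \<delta> \<le> x$j \<and> x$j < (of_int (m$j) + 1/2) * \<delta>) \<longleftrightarrow>
        (of_int (m$j) \<le> x$j/\<delta> + 1/2 \<and> x$j/\<delta> + 1/2 < of_int (m$j) + 1)"
      using assms by (simp add: field_simps)
    also have "\<dots> \<longleftrightarrow> m$j = \<lfloor>x$j/\<delta> + 1/2\<rfloor>"
      by (metis floor_eq_iff)
    finally show ?thesis .
  qed
  then show ?thesis unfolding grid_cube_def vec_eq_iff by auto
qed

lemma roundoff_eq: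
  assumes "\<delta> > 0"
  shows "roundoff \<delta> x = grid_pt \<delta> (\<chi> j. \<lfloor>x$j/\<delta> + 1/2\<rfloor>)"
  unfolding roundoff_def by (simp add: cube_iff[OF assms])

lemma roundoff1: "roundoff 1 x = (\<chi> j. of_int \<lfloor>x$j + 1/2\<rfloor>)"
  by (simp add: roundoff_eq grid_pt_def)

lemma roundoff_shift:
  assumes "\<delta> > 0"
  shows "roundoff \<delta> (grid_pt \<delta> m + \<delta> *\<^sub>R y) = grid_pt \<delta> m + \<delta> *\<^sub>R roundoff 1 y"
proof -
  have "\<lfloor>(\<delta> * of_int (m$j) + \<delta> * y$j)/\<delta> + 1/2\<rfloor> = m$j + \<lfloor>y$j + 1/2\<rfloor>" for j
  proof -
    have "(\<delta> * of_int (m$j) + \<delta> * y$j)/\<delta> + 1/2 = (y$j + 1/2) + of_int (m$j)"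
      using assms by (simp add: field_simps)
    then show ?thesis by (metis floor_add_int add.commute)
  qed
  then show ?thesis using assms
    by (simp add: roundoff_eq roundoff1 grid_pt_def vec_eq_iff algebra_simps)
qed

lemma per_char:
  assumes "f ` C \<subseteq> C"
  shows "\<Inter> {\<Lambda>. absorbing C f \<Lambda>} = {p\<in>C. \<exists>k>0. (f^^k) p = p}"
proof
  have inC: "x \<in> C \<Longrightarrow> (f^^k) x \<in> C" for x k
    by (induction k) (use assms in auto)
  show "\<Inter> {\<Lambda>. absorbing C f \<Lambda>} \<subseteq> {p\<in>C. \<exists>k>0. (f^^k) p = p}"
  proof
    fix p assume p: "p \<in> \<Inter> {\<Lambda>. absorbing C f \<Lambda>}"
    have "absorbing C f C" unfolding absorbing_def using inC by blast
    with p have pC: "p \<in> C" by blast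
    show "p \<in> {p\<in>C. \<exists>k>0. (f^^k) p = p}"
    proof (rule ccontr)
      assume np: "p \<notin> {p\<in>C. \<exists>k>0. (f^^k) p = p}"
      have "absorbing C f (C - {p})" unfolding absorbing_def
      proof (intro conjI ballI)
        fix x assume x: "x \<in> C"
        show "\<exists>N. \<forall>k\<ge>N. (f ^^ k) x \<in> C - {p}"
        proof (cases "\<exists>a. (f^^a) x = p")
          case True
          then obtain a where a: "(f^^a) x = p" by blast
          have "(f ^^ k) x \<in> C - {p}" if "k \<ge> Suc a" for k
          proof -
            have "(f ^^ k) x = (f^^(k-a)) ((f^^a) x)"
              using that by (metis funpow_add le_add_diff_inverse2 Suc_leD comp_apply)
            moreover have "k - a > 0" using that by simp
            moreover have "\<forall>j>0. (f^^j) p \<noteq> p" using np pC by blast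
            ultimately have "(f ^^ k) x \<noteq> p" using a by metis
            then show ?thesis using inC x by auto
          qed
          then show ?thesis by blast
        next
          case False
          then show ?thesis using inC x by blast
        qed
      qed auto
      then show False using p by blast
    qed
  qed
  show "{p\<in>C. \<exists>k>0. (f^^k) p = p} \<subseteq> \<Inter> {\<Lambda>. absorbing C f \<Lambda>}"
  proof safe
    fix p k \<Lambda> assume pC: "p \<in> C" and k: "k > 0" "(f^^k) p = p" and ab: "absorbing C f \<Lambda>"
    then obtain N where N: "\<forall>j\<ge>N. (f^^j) p \<in> \<Lambda>" unfolding absorbing_def by blast
    have "((f^^k)^^N) p = p" by (induction N) (use k in auto)
    then have "(f^^(k*N)) p = p" by (simp add: funpow_mult)
    moreover have "k*N \<ge> N" using k by simp
    ultimately show "p \<in> \<Lambda>" using N by metis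
  qed
qed

definition Per :: "real \<Rightarrow> real^'n^'n \<Rightarrow> real^'n \<Rightarrow> (real^'n) set" where
  "Per \<delta> A z = {p \<in> grid \<delta>. \<exists>k>0. (roundoff_map \<delta> (aff_map A z) ^^ k) p = p}"

lemma Mcard_Per: "Mcard \<delta> A z = card (Per \<delta> A z)"
proof -
  have "roundoff_map \<delta> (aff_map A z) ` grid \<delta> \<subseteq> grid \<delta>"
    by (auto simp: roundoff_map_def roundoff_def grid_def)
  then show ?thesis unfolding Mcard_def min_absorbing_def Per_def by (simp add: per_char)
qed




lemma conj_step:
  assumes "\<delta> > 0"
  shows "roundoff_map \<delta> (aff_map A (grid_pt \<delta> m + \<delta> *\<^sub>R u)) (grid_pt \<delta> m + \<delta> *\<^sub>R p)
       = grid_pt \<delta> m + \<delta> *\<^sub>R roundoff_map 1 (aff_map A u) p"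
proof -
  have "aff_map A (grid_pt \<delta> m + \<delta> *\<^sub>R u) (grid_pt \<delta> m + \<delta> *\<^sub>R p)
      = grid_pt \<delta> m + \<delta> *\<^sub>R aff_map A u p"
  proof -
    have "(grid_pt \<delta> m + \<delta> *\<^sub>R p) - (grid_pt \<delta> m + \<delta> *\<^sub>R u) = \<delta> *\<^sub>R (p - u)"
      by (simp add: scaleR_diff_right)
    then show ?thesis unfolding aff_map_def
      by (simp add: matrix_vector_mult_scaleR scaleR_add_right)
  qed
  then show ?thesis unfolding roundoff_map_def using roundoff_shift[OF assms] by simp
qed

lemma conj_pow:
  assumes "\<delta> > 0"
  shows "(roundoff_map \<delta> (aff_map A (grid_pt \<delta> m + \<delta> *\<^sub>R u)) ^^ k) (grid_pt \<delta> m + \<delta> *\<^sub>R p)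
       = grid_pt \<delta> m + \<delta> *\<^sub>R (roundoff_map 1 (aff_map A u) ^^ k) p"
  by (induction k) (simp_all add: conj_step[OF assms])

lemma grid_image:
  fixes m :: "int^'n"
  assumes "\<delta> > 0"
  shows "(grid \<delta> :: (real^'n) set) = (\<lambda>p. grid_pt \<delta> m + \<delta> *\<^sub>R p) ` grid 1"
proof
  show "(\<lambda>p. grid_pt \<delta> m + \<delta> *\<^sub>R p) ` grid 1 \<subseteq> grid \<delta>"
  proof
    fix x :: "real^'n" assume "x \<in> (\<lambda>p. grid_pt \<delta> m + \<delta> *\<^sub>R p) ` grid 1"
    then obtain b where "x = grid_pt \<delta> m + \<delta> *\<^sub>R grid_pt 1 b" by (auto simp: grid_def)
    then have "x = grid_pt \<delta> (m + b)" by (simp add: grid_pt_def vec_eq_iff algebra_simps)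
    then show "x \<in> grid \<delta>" by (simp add: grid_def)
  qed
  show "grid \<delta> \<subseteq> (\<lambda>p. grid_pt \<delta> m + \<delta> *\<^sub>R p) ` grid 1"
  proof
    fix x :: "real^'n" assume "x \<in> grid \<delta>"
    then obtain a where "x = grid_pt \<delta> a" by (auto simp: grid_def)
    then have "x = grid_pt \<delta> m + \<delta> *\<^sub>R grid_pt 1 (a - m)" by (simp add: grid_pt_def vec_eq_iff algebra_simps)
    then show "x \<in> (\<lambda>p. grid_pt \<delta> m + \<delta> *\<^sub>R p) ` grid 1" unfolding grid_def by blast
  qed
qed

lemma Per_conj:
  assumes "\<delta> > 0"
  shows "Per \<delta> A (grid_pt \<delta> m + \<delta> *\<^sub>R u) = (\<lambda>p. grid_pt \<delta> m + \<delta> *\<^sub>R p) ` Per 1 A u"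
proof -
  let ?\<phi> = "\<lambda>p. grid_pt \<delta> m + \<delta> *\<^sub>R p"
  have inj: "?\<phi> x = ?\<phi> y \<longleftrightarrow> x = y" for x y using assms by simp
  show ?thesis
  proof safe
    fix q assume q: "q \<in> Per \<delta> A (grid_pt \<delta> m + \<delta> *\<^sub>R u)"
    then have "q \<in> ?\<phi> ` grid 1" unfolding Per_def using grid_image[OF assms, of m] by blast
    then obtain p where p: "p \<in> grid 1" "q = ?\<phi> p" by blast
    from q obtain k where k: "k > 0" "(roundoff_map \<delta> (aff_map A (?\<phi> u)) ^^ k) q = q"
      unfolding Per_def by blast
    then have "?\<phi> ((roundoff_map 1 (aff_map A u) ^^ k) p) = ?\<phi> p"
      using p conj_pow[OF assms, of k A m u p] by simp
    then have "(roundoff_map 1 (aff_map A u) ^^ k) p = p" using inj by blast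
    then have "p \<in> Per 1 A u" unfolding Per_def using p k by blast
    then show "q \<in> ?\<phi> ` Per 1 A u" using p by blast
  next
    fix p assume p: "p \<in> Per 1 A u"
    then obtain k where k: "k > 0" "(roundoff_map 1 (aff_map A u) ^^ k) p = p" and pg: "p \<in> grid 1"
      unfolding Per_def by blast
    have "?\<phi> p \<in> grid \<delta>" using pg grid_image[OF assms, of m] by blast
    moreover have "(roundoff_map \<delta> (aff_map A (?\<phi> u)) ^^ k) (?\<phi> p) = ?\<phi> p"
      using k conj_pow[OF assms, of k A m u p] by simp
    ultimately show "?\<phi> p \<in> Per \<delta> A (grid_pt \<delta> m + \<delta> *\<^sub>R u)"
      unfolding Per_def using k by blast
  qed
qed

lemma Mcard_conj:
  assumes "\<delta> > 0"
  shows "Mcard \<delta> A (grid_pt \<delta> m + \<delta> *\<^sub>R u) = Mcard 1 A u"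
proof -
  have inj: "inj (\<lambda>p. grid_pt \<delta> m + \<delta> *\<^sub>R p)" using assms by (auto intro: injI)
  have "Mcard \<delta> A (grid_pt \<delta> m + \<delta> *\<^sub>R u) = card ((\<lambda>p. grid_pt \<delta> m + \<delta> *\<^sub>R p) ` Per 1 A u)"
    by (simp only: Mcard_Per Per_conj[OF assms])
  also have "\<dots> = card (Per 1 A u)"
    by (rule card_image[OF inj_on_subset[OF inj subset_UNIV]])
  finally show ?thesis by (simp only: Mcard_Per)
qed

lemma Mcard_scale:
  assumes "\<delta> > 0"
  shows "Mcard \<delta> A z = Mcard 1 A ((1/\<delta>) *\<^sub>R z)"
proof -
  have "grid_pt \<delta> 0 = 0" by (simp add: grid_pt_def vec_eq_iff)
  then have e: "z = grid_pt \<delta> 0 + \<delta> *\<^sub>R ((1/\<delta>) *\<^sub>R z)" using assms by simp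
  have "Mcard \<delta> A z = Mcard \<delta> A (grid_pt \<delta> 0 + \<delta> *\<^sub>R ((1/\<delta>) *\<^sub>R z))"
    using e by (rule arg_cong)
  also have "\<dots> = Mcard 1 A ((1/\<delta>) *\<^sub>R z)" by (rule Mcard_conj[OF assms])
  finally show ?thesis .
qed




lemma card_meas:
  fixes P :: "'a \<Rightarrow> 'b set" and g :: "'i::countable \<Rightarrow> 'b"
  assumes sub: "\<And>x. x \<in> space M \<Longrightarrow> P x \<subseteq> range g"
    and E: "\<And>i. Measurable.pred M (\<lambda>x. g i \<in> P x)"
  shows "(\<lambda>x. card (P x)) \<in> M \<rightarrow>\<^sub>M count_space UNIV"
proof -
  have eqS: "{x\<in>space M. P x = S} \<in> sets M" if S: "S \<subseteq> range g" for S
  proof -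
    have "P x = S \<longleftrightarrow> (\<forall>i. g i \<in> P x \<longleftrightarrow> g i \<in> S)" if x: "x \<in> space M" for x
    proof
      assume h: "\<forall>i. g i \<in> P x \<longleftrightarrow> g i \<in> S"
      show "P x = S"
      proof (rule set_eqI)
        fix y show "y \<in> P x \<longleftrightarrow> y \<in> S" using sub[OF x] S h by blast
      qed
    qed simp
    then have "{x\<in>space M. P x = S} = {x\<in>space M. \<forall>i. g i \<in> P x \<longleftrightarrow> g i \<in> S}"
      by blast
    also have "\<dots> \<in> sets M"
    proof -
      have "Measurable.pred M (\<lambda>x. g i \<in> P x \<longleftrightarrow> g i \<in> S)" for i
      proof (cases "g i \<in> S")
        case True then show ?thesis using E[of i] by simp
      next
        case False
        have "{x\<in>space M. g i \<notin> P x} = space M - {x\<in>space M. g i \<in> P x}" by blast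
        also have "\<dots> \<in> sets M" using E[of i] unfolding pred_def by blast
        finally show ?thesis using False unfolding pred_def by simp
      qed
      then have "Measurable.pred M (\<lambda>x. \<forall>i. g i \<in> P x \<longleftrightarrow> g i \<in> S)" by (rule pred_intros_countable(1))
      then show ?thesis by (simp add: pred_def)
    qed
    finally show ?thesis .
  qed
  have cF: "countable {S. finite S \<and> S \<subseteq> range g}"
    by (intro countable_Collect_finite_subset countable_image countableI_type)
  have "(\<lambda>x. card (P x)) -` {k} \<inter> space M \<in> sets M" for k
  proof (cases "k = 0")
    case True
    let ?F = "{S. finite S \<and> S \<subseteq> range g \<and> S \<noteq> {}}"
    have "card (P x) = k \<longleftrightarrow> \<not> (\<exists>S\<in>?F. P x = S)" if x: "x \<in> space M" for x
    proof
      assume "card (P x) = k"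
      then have "card (P x) = 0" using True by simp
      then show "\<not> (\<exists>S\<in>?F. P x = S)" by auto
    next
      assume h: "\<not> (\<exists>S\<in>?F. P x = S)"
      show "card (P x) = k"
      proof (rule ccontr)
        assume "card (P x) \<noteq> k"
        then have "card (P x) > 0" using True by simp
        then have "finite (P x)" "P x \<noteq> {}" using card_gt_0_iff by blast+
        then have "P x \<in> ?F" using sub[OF x] by blast
        then show False using h by blast
      qed
    qed
    note ceq = this
    have "(\<lambda>x. card (P x)) -` {k} \<inter> space M = space M - (\<Union>S\<in>?F. {x\<in>space M. P x = S})"
    proof (rule set_eqI)
      fix x
      have a: "x \<in> (\<lambda>x. card (P x)) -` {k} \<inter> space M \<longleftrightarrow> x \<in> space M \<and> card (P x) = k" by (simp add: conj_commute)
      have b: "x \<in> space M - (\<Union>S\<in>?F. {x\<in>space M. P x = S}) \<longleftrightarrow> x \<in> space M \<and> \<not> (\<exists>S\<in>?F. P x = S)" by blast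
      show "x \<in> (\<lambda>x. card (P x)) -` {k} \<inter> space M \<longleftrightarrow> x \<in> space M - (\<Union>S\<in>?F. {x\<in>space M. P x = S})"
        unfolding a b using ceq by blast
    qed
    also have "\<dots> \<in> sets M"
    proof (intro sets.Diff sets.top sets.countable_UN'')
      show "countable ?F" by (rule countable_subset[OF _ cF]) blast
      fix S assume "S \<in> ?F" then show "{x \<in> space M. P x = S} \<in> sets M" by (intro eqS) blast
    qed
    finally show ?thesis .
  next
    case False
    let ?F = "{S. finite S \<and> S \<subseteq> range g \<and> card S = k}"
    have "card (P x) = k \<longleftrightarrow> (\<exists>S\<in>?F. P x = S)" if x: "x \<in> space M" for x
    proof
      assume c: "card (P x) = k"
      then have "finite (P x)" using False card_eq_0_iff by metis
      then show "\<exists>S\<in>?F. P x = S" using c sub[OF x] by blast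
    qed blast
    note ceq = this
    have "(\<lambda>x. card (P x)) -` {k} \<inter> space M = (\<Union>S\<in>?F. {x\<in>space M. P x = S})"
    proof (rule set_eqI)
      fix x
      have a: "x \<in> (\<lambda>x. card (P x)) -` {k} \<inter> space M \<longleftrightarrow> x \<in> space M \<and> card (P x) = k" by (simp add: conj_commute)
      have b: "x \<in> (\<Union>S\<in>?F. {x\<in>space M. P x = S}) \<longleftrightarrow> x \<in> space M \<and> (\<exists>S\<in>?F. P x = S)" by blast
      show "x \<in> (\<lambda>x. card (P x)) -` {k} \<inter> space M \<longleftrightarrow> x \<in> (\<Union>S\<in>?F. {x\<in>space M. P x = S})"
        unfolding a b using ceq by blast
    qed
    also have "\<dots> \<in> sets M"
    proof (intro sets.countable_UN'')
      show "countable ?F" by (rule countable_subset[OF _ cF]) blast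
      fix S assume "S \<in> ?F" then show "{x \<in> space M. P x = S} \<in> sets M" by (intro eqS) blast
    qed
    finally show ?thesis .
  qed
  then show ?thesis by (simp add: measurable_count_space_eq2_countable)
qed

lemma meas_nth[measurable (raw)]:
  fixes f :: "'a \<Rightarrow> 'b::topological_space^'n::finite"
  assumes "f \<in> borel_measurable M"
  shows "(\<lambda>x. f x $ j) \<in> borel_measurable M"
  using measurable_compose[OF assms borel_measurable_continuous_onI[OF continuous_on_component[OF continuous_on_id]]]
  by simp

lemma meas_lambda:
  fixes f :: "'n::finite \<Rightarrow> 'a \<Rightarrow> real"
  assumes "\<And>j. f j \<in> borel_measurable M"
  shows "(\<lambda>x. (\<chi> j. f j x) :: real^'n) \<in> borel_measurable M"
  unfolding borel_measurable_euclidean_space[where 'c="real^'n"]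
  using assms by (auto simp: Basis_vec_def inner_axis)

lemma meas_mv[measurable (raw)]:
  fixes A :: "'a \<Rightarrow> real^'n^'n" and v :: "'a \<Rightarrow> real^'n"
  assumes "A \<in> borel_measurable M" "v \<in> borel_measurable M"
  shows "(\<lambda>x. A x *v v x) \<in> borel_measurable M"
  unfolding matrix_vector_mult_def
  by (rule meas_lambda) (use assms in measurable)

lemma meas_roundoff1[measurable (raw)]:
  fixes f :: "'a \<Rightarrow> real^'n"
  assumes "f \<in> borel_measurable M"
  shows "(\<lambda>x. roundoff 1 (f x)) \<in> borel_measurable M"
  unfolding roundoff1
  by (rule meas_lambda) (use assms in measurable)

definition gi :: "nat \<Rightarrow> real^'n \<Rightarrow> (real^'n^'n) \<times> (real^'n) \<Rightarrow> real^'n" where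
  "gi k p x = (roundoff_map 1 (aff_map (fst x) (snd x)) ^^ k) p"

lemma gi_meas[measurable]: "gi k p \<in> borel_measurable borel"
proof (induction k)
  case 0
  then show ?case by (simp add: gi_def)
next
  case (Suc k)
  have "gi (Suc k) p = (\<lambda>x. roundoff 1 (fst x *v (gi k p x - snd x) + snd x))"
    by (simp add: gi_def roundoff_map_def aff_map_def fun_eq_iff)
  have f: "fst \<in> borel_measurable (borel :: ((real^'n^'n) \<times> (real^'n)) measure)"
    by (intro borel_measurable_continuous_onI continuous_intros)
  have s: "snd \<in> borel_measurable (borel :: ((real^'n^'n) \<times> (real^'n)) measure)"
    by (intro borel_measurable_continuous_onI continuous_intros)
  have "(\<lambda>x. roundoff 1 (fst x *v (gi k p x - snd x) + snd x)) \<in> borel_measurable borel"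
    by (intro meas_roundoff1 borel_measurable_add meas_mv borel_measurable_diff Suc f s)
  then show ?case using \<open>gi (Suc k) p = _\<close> by simp
qed

lemma H_meas: "(\<lambda>x. Mcard 1 (fst x) (snd x)) \<in> (borel :: ((real^'n^'n) \<times> (real^'n)) measure) \<rightarrow>\<^sub>M count_space UNIV"
proof -
  have "(\<lambda>x. card (Per 1 (fst x) (snd x) :: (real^'n) set)) \<in> (borel :: ((real^'n^'n) \<times> (real^'n)) measure) \<rightarrow>\<^sub>M count_space UNIV"
  proof (rule card_meas[where g="grid_pt 1"])
    show "Per 1 (fst x) (snd x) \<subseteq> range (grid_pt 1)" for x
      by (auto simp: Per_def grid_def)
    fix i :: "int^'n"
    have ex: "\<And>Q. (\<exists>k>0. Q k) \<longleftrightarrow> (\<exists>k. Q (Suc k))" by (metis gr0_implies_Suc zero_less_Suc)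
    have "(\<lambda>x. grid_pt 1 i \<in> Per 1 (fst x) (snd x)) = (\<lambda>x. \<exists>k. gi (Suc k) (grid_pt 1 i) x = grid_pt 1 i)"
      unfolding Per_def gi_def fun_eq_iff mem_Collect_eq ex
      by (simp add: grid_def del: funpow.simps)
    moreover have "Measurable.pred borel (\<lambda>x. \<exists>k. gi (Suc k) (grid_pt 1 i) x = grid_pt 1 i)"
    proof -
      have "Measurable.pred borel (\<lambda>x. gi (Suc k) (grid_pt 1 i) x = grid_pt 1 i)" for k
      proof (rule pred_def[THEN iffD2])
        have eq: "{x\<in>space borel. gi (Suc k) (grid_pt 1 i) x = grid_pt 1 i} = gi (Suc k) (grid_pt 1 i) -` {grid_pt 1 i} \<inter> space borel"
          by auto
        show "{x\<in>space borel. gi (Suc k) (grid_pt 1 i) x = grid_pt 1 i} \<in> sets borel"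
          unfolding eq by (rule measurable_sets[OF gi_meas]) simp
      qed
      then have "Measurable.pred borel (\<lambda>x. \<exists>k. gi (Suc k) (grid_pt 1 i) x = grid_pt 1 i)"
        by (rule pred_intros_countable(2))
      then show ?thesis by simp
    qed
    ultimately show "Measurable.pred borel (\<lambda>x. grid_pt 1 i \<in> Per 1 (fst x) (snd x))" by simp
  qed
  then show ?thesis by (simp add: Mcard_Per)
qed

lemma Mcard_meas: 
  assumes "\<delta> > 0"
  shows "(\<lambda>x. Mcard \<delta> (fst x) (snd x)) \<in> (borel :: ((real^'n^'n) \<times> (real^'n)) measure) \<rightarrow>\<^sub>M count_space UNIV"
proof -
  have eq: "(\<lambda>x. Mcard \<delta> (fst x) (snd x)) = (\<lambda>x. Mcard 1 (fst x) (snd x)) \<circ> (\<lambda>x. (fst x, (1/\<delta>) *\<^sub>R snd x))"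
    by (rule ext) (simp add: Mcard_scale[OF assms])
  have m: "(\<lambda>x::(real^'n^'n) \<times> (real^'n). (fst x, (1/\<delta>) *\<^sub>R snd x)) \<in> borel_measurable borel"
    by (intro borel_measurable_continuous_onI continuous_intros)
  show ?thesis unfolding eq by (rule measurable_comp[OF m H_meas])
qed




abbreviation "QQ \<equiv> grid_cube 1 (0::int^'n)"

lemma cube_sets: "grid_cube \<delta> m \<in> sets (borel :: (real^'n) measure)"
proof -
  have "grid_cube \<delta> m = (\<Inter>j. {x::real^'n. (of_int (m$j) - 1/2) * \<delta> \<le> x$j} \<inter> {x. x$j < (of_int (m$j) + 1/2) * \<delta>})"
    unfolding grid_cube_def by auto
  also have "\<dots> \<in> sets borel"
    by (intro sets.countable_INT' countableI_type sets.Int borel_closed borel_open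
        closed_Collect_le open_Collect_less continuous_intros) auto
  finally show ?thesis .
qed

lemma QQ_measure: "emeasure lborel (QQ :: (real^'n) set) = 1"
proof -
  let ?a = "(\<chi> j. -1/2) :: real^'n" and ?b = "(\<chi> j. 1/2) :: real^'n"
  have s1: "box ?a ?b \<subseteq> QQ" by (auto simp: mem_box_cart grid_cube_def less_imp_le)
  have s2: "QQ \<subseteq> cbox ?a ?b"
  proof
    fix x :: "real^'n" assume "x \<in> QQ"
    then have "\<forall>j. -1/2 \<le> x$j \<and> x$j < 1/2" by (simp add: grid_cube_def)
    then have "\<forall>j. -1/2 \<le> x$j \<and> x$j \<le> 1/2" by (meson less_imp_le)
    then show "x \<in> cbox ?a ?b" by (simp add: mem_box_cart)
  qed
  have p: "(\<Prod>b\<in>Basis. (?b - ?a) \<bullet> b) = 1"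
    by (rule prod.neutral) (auto simp: Basis_vec_def inner_axis)
  have le: "\<forall>b\<in>Basis. ?a \<bullet> b \<le> ?b \<bullet> b"
    by (auto simp: Basis_vec_def inner_axis)
  have e1: "emeasure lborel (box ?a ?b) = 1"
    unfolding emeasure_lborel_box_eq using p le by simp
  have e2: "emeasure lborel (cbox ?a ?b) = 1"
    unfolding emeasure_lborel_cbox_eq using p le by simp
  have "1 \<le> emeasure lborel (QQ :: (real^'n) set)"
    using emeasure_mono[OF s1, of lborel] e1 cube_sets[of 1 "0::int^'n"] by simp
  moreover have "emeasure lborel (QQ :: (real^'n) set) \<le> 1"
    using emeasure_mono[OF s2, of lborel] e2 by simp
  ultimately show ?thesis by simp
qed

lemma lborel_pre:
  fixes t :: "real^'n"
  assumes "\<delta> > 0" "S \<in> sets borel"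
  shows "emeasure lborel S = ennreal (\<delta> ^ DIM(real^'n)) * emeasure lborel ((\<lambda>u. t + \<delta> *\<^sub>R u) -` S)"
proof -
  have L: "lborel = density (distr lborel borel (\<lambda>x. t + \<delta> *\<^sub>R x)) (\<lambda>_. \<bar>\<delta>\<bar>^DIM(real^'n))"
    using lborel_affine[of \<delta> t] assms by simp
  have m: "(\<lambda>x::real^'n. t + \<delta> *\<^sub>R x) \<in> borel_measurable borel"
    by (intro borel_measurable_continuous_onI continuous_intros)
  have "emeasure lborel S = emeasure (density (distr lborel borel (\<lambda>x. t + \<delta> *\<^sub>R x)) (\<lambda>_. \<bar>\<delta>\<bar>^DIM(real^'n))) S"
    using arg_cong[OF L, of "\<lambda>M. emeasure M S"] .
  also have "\<dots> = \<bar>\<delta>\<bar>^DIM(real^'n) * emeasure (distr lborel borel (\<lambda>x. t + \<delta> *\<^sub>R x)) S"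
    using assms by (subst emeasure_density_const) auto
  also have "\<dots> = ennreal (\<delta> ^ DIM(real^'n)) * emeasure lborel ((\<lambda>u. t + \<delta> *\<^sub>R u) -` S)"
  proof -
    have m': "(\<lambda>x::real^'n. t + \<delta> *\<^sub>R x) \<in> lborel \<rightarrow>\<^sub>M borel" using m by simp
    show ?thesis using assms emeasure_distr[OF m', of S] by simp
  qed
  finally show ?thesis .
qed

lemma cube_shift_iff:
  assumes "\<delta> > 0"
  shows "grid_pt \<delta> m + \<delta> *\<^sub>R u \<in> grid_cube \<delta> m \<longleftrightarrow> u \<in> QQ"
proof -
  have "\<lfloor>(grid_pt \<delta> m + \<delta> *\<^sub>R u)$j/\<delta> + 1/2\<rfloor> = m$j + \<lfloor>u$j + 1/2\<rfloor>" for j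
  proof -
    have "(grid_pt \<delta> m + \<delta> *\<^sub>R u)$j/\<delta> + 1/2 = (u$j + 1/2) + of_int (m$j)"
      using assms by (simp add: grid_pt_def field_simps)
    then show ?thesis by (metis floor_add_int add.commute)
  qed
  then show ?thesis using assms
    by (simp add: cube_iff vec_eq_iff)
qed

lemma cube_measure:
  assumes "\<delta> > 0"
  shows "emeasure lborel (grid_cube \<delta> m :: (real^'n) set) = ennreal (\<delta> ^ DIM(real^'n))"
proof -
  have "(\<lambda>u. grid_pt \<delta> m + \<delta> *\<^sub>R u) -` grid_cube \<delta> m = (QQ :: (real^'n) set)"
    using cube_shift_iff[OF assms] by auto
  then have "emeasure lborel (grid_cube \<delta> m :: (real^'n) set) = ennreal (\<delta> ^ DIM(real^'n)) * emeasure lborel (QQ :: (real^'n) set)"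
    using lborel_pre[OF assms cube_sets[of \<delta> m], where t="grid_pt \<delta> m"] by simp
  then show ?thesis by (simp only: QQ_measure mult_1_right)
qed

lemma cube_disjoint:
  assumes "\<delta> > 0" "grid_cube \<delta> a \<noteq> grid_cube \<delta> b"
  shows "grid_cube \<delta> a \<inter> grid_cube \<delta> b = {}"
proof (rule ccontr)
  assume "grid_cube \<delta> a \<inter> grid_cube \<delta> b \<noteq> {}"
  then obtain x where "x \<in> grid_cube \<delta> a" "x \<in> grid_cube \<delta> b" by blast
  then have "a = b" by (simp add: cube_iff[OF assms(1)])
  then show False using assms(2) by simp
qed

lemma union_measure:
  fixes \<C> :: "(real^'n) set set"
  assumes "\<delta> > 0" "finite \<C>" "\<C> \<subseteq> range (grid_cube \<delta>)"
  shows "emeasure lborel (\<Union>\<C>) = of_nat (card \<C>) * ennreal (\<delta> ^ DIM(real^'n))"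
proof -
  have "(\<Sum>C\<in>\<C>. emeasure lborel (id C)) = emeasure lborel (\<Union>C\<in>\<C>. id C)"
  proof (rule sum_emeasure)
    show "id ` \<C> \<subseteq> sets lborel" using assms(3) cube_sets by auto
    show "disjoint_family_on id \<C>" unfolding disjoint_family_on_def
    proof (intro ballI impI)
      fix C D assume "C \<in> \<C>" "D \<in> \<C>" "C \<noteq> D"
      then obtain a b where "C = grid_cube \<delta> a" "D = grid_cube \<delta> b" using assms(3) by blast
      then show "id C \<inter> id D = {}" using cube_disjoint[OF assms(1)] \<open>C \<noteq> D\<close> by simp
    qed
  qed (rule assms(2))
  moreover have "emeasure lborel (id C) = ennreal (\<delta> ^ DIM(real^'n))" if "C \<in> \<C>" for C
    using that assms(3) cube_measure[OF assms(1)] by auto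
  ultimately show ?thesis by simp
qed




definition rho :: "('a \<Rightarrow> real^'n^'n) \<Rightarrow> 'a measure \<Rightarrow> nat set \<Rightarrow> ennreal" where
  "rho L M K = (\<integral>\<^sup>+A. emeasure lborel {u \<in> (QQ :: (real^'n) set). Mcard 1 A u \<in> K} \<partial>(distr M borel L))"

lemma sets_prod_borel:
  "sets (borel \<Otimes>\<^sub>M borel) = sets (borel :: ((real^'n^'n) \<times> (real^'n)) measure)"
  by (rule arg_cong[OF borel_prod])

lemma snd_meas: "snd \<in> borel_measurable (borel :: ((real^'n^'n) \<times> (real^'n)) measure)"
  by (intro borel_measurable_continuous_onI continuous_intros)

lemma cube_prob:
  fixes M :: "'a measure" and L :: "'a \<Rightarrow> real^'n^'n" and Z :: "'a \<Rightarrow> real^'n"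
    and \<C> :: "(real^'n) set set" and m :: "int^'n" and K :: "nat set"
  assumes P: "prob_space M" and \<delta>: "\<delta> > 0" and fin: "finite \<C>" and sub: "\<C> \<subseteq> range (grid_cube \<delta>)"
    and mL: "L \<in> borel_measurable M" and mZ: "Z \<in> borel_measurable M"
    and ind: "prob_space.indep_set M {L -` A \<inter> space M | A. A \<in> sets borel} {Z -` B \<inter> space M | B. B \<in> sets borel}"
    and dZ: "distr M lborel Z = uniform_measure lborel (\<Union>\<C>)"
    and mC: "grid_cube \<delta> m \<in> \<C>"
  shows "emeasure M {\<omega>\<in>space M. Mcard \<delta> (L \<omega>) (Z \<omega>) \<in> K \<and> Z \<omega> \<in> grid_cube \<delta> m}
       = ennreal (\<delta>^DIM(real^'n)) * rho L M K / emeasure lborel (\<Union>\<C>)"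
proof -
  interpret prob_space M by (rule P)
  let ?C = "grid_cube \<delta> m"
  let ?U = "\<Union>\<C>"
  let ?c = "ennreal (\<delta>^DIM(real^'n))"
  let ?V = "emeasure lborel ?U"
  let ?\<mu>L = "distr M borel L" and ?\<mu>Z = "distr M borel Z"
  have J: "?\<mu>L \<Otimes>\<^sub>M ?\<mu>Z = distr M (borel \<Otimes>\<^sub>M borel) (\<lambda>x. (L x, Z x))"
  proof -
    have XY: "(\<lambda>x. (L x, Z x)) \<in> M \<rightarrow>\<^sub>M borel \<Otimes>\<^sub>M borel" by (rule measurable_Pair[OF mL mZ])
    interpret X: prob_space ?\<mu>L by (rule prob_space_distr) (rule mL)
    interpret Y: prob_space ?\<mu>Z by (rule prob_space_distr) (rule mZ)
    interpret XY: pair_prob_space ?\<mu>L ?\<mu>Z ..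
    show ?thesis
    proof (rule pair_measure_eqI)
      show "sigma_finite_measure ?\<mu>L" ..
      show "sigma_finite_measure ?\<mu>Z" ..
      fix A B assume A: "A \<in> sets ?\<mu>L" and B: "B \<in> sets ?\<mu>Z"
      have "emeasure (distr M (borel \<Otimes>\<^sub>M borel) (\<lambda>x. (L x, Z x))) (A \<times> B)
          = emeasure M ((\<lambda>x. (L x, Z x)) -` (A \<times> B) \<inter> space M)"
        using A B by (intro emeasure_distr[OF XY]) auto
      also have "(\<lambda>x. (L x, Z x)) -` (A \<times> B) \<inter> space M = (L -` A \<inter> space M) \<inter> (Z -` B \<inter> space M)"
        by auto
      also have "emeasure M \<dots> = emeasure M (L -` A \<inter> space M) * emeasure M (Z -` B \<inter> space M)"
      proof -
        have "prob ((L -` A \<inter> space M) \<inter> (Z -` B \<inter> space M)) = prob (L -` A \<inter> space M) * prob (Z -` B \<inter> space M)"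
          using A B by (intro indep_setD[OF ind]) auto
        then show ?thesis by (simp add: emeasure_eq_measure measure_nonneg ennreal_mult)
      qed
      also have "\<dots> = emeasure ?\<mu>L A * emeasure ?\<mu>Z B"
        using mL mZ A B by (simp add: emeasure_distr)
      finally show "emeasure ?\<mu>L A * emeasure ?\<mu>Z B = emeasure (distr M (borel \<Otimes>\<^sub>M borel) (\<lambda>x. (L x, Z x))) (A \<times> B)"
        by simp
    qed simp
  qed
  define S where "S = {x :: (real^'n^'n) \<times> (real^'n). Mcard \<delta> (fst x) (snd x) \<in> K \<and> snd x \<in> ?C}"
  have Sb: "S \<in> sets (borel :: ((real^'n^'n) \<times> (real^'n)) measure)"
  proof -
    have "(\<lambda>x. Mcard \<delta> (fst x) (snd x)) -` K \<inter> space borel \<in> sets (borel :: ((real^'n^'n) \<times> (real^'n)) measure)"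
      by (rule measurable_sets[OF Mcard_meas[OF \<delta>]]) simp
    moreover have "snd -` ?C \<inter> space borel \<in> sets (borel :: ((real^'n^'n) \<times> (real^'n)) measure)"
      by (rule measurable_sets[OF snd_meas cube_sets])
    ultimately have "((\<lambda>x. Mcard \<delta> (fst x) (snd x)) -` K \<inter> space borel) \<inter> (snd -` ?C \<inter> space borel) \<in> sets (borel :: ((real^'n^'n) \<times> (real^'n)) measure)"
      by (rule sets.Int)
    moreover have "((\<lambda>x. Mcard \<delta> (fst x) (snd x)) -` K \<inter> space borel) \<inter> (snd -` ?C \<inter> space borel) = S"
      unfolding S_def by auto
    ultimately show ?thesis by simp
  qed
  have Sb2: "S \<in> sets (borel \<Otimes>\<^sub>M borel)" using Sb sets_prod_borel by blast
  have mLZ: "(\<lambda>x. (L x, Z x)) \<in> M \<rightarrow>\<^sub>M borel \<Otimes>\<^sub>M borel" by (rule measurable_Pair[OF mL mZ])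
  have sfZ: "sigma_finite_measure ?\<mu>Z"
    by (rule prob_space_imp_sigma_finite[OF prob_space_distr[OF mZ]])
  have UC: "?C \<subseteq> ?U" using mC by blast
  have Ub: "?U \<in> sets lborel"
    using fin sub cube_sets by (intro sets.finite_Union) auto
  have dZ': "?\<mu>Z = uniform_measure lborel ?U"
    using dZ distr_cong[of M M borel lborel Z Z] by simp
  have fA: "emeasure ?\<mu>Z (Pair A -` S) = ?c * emeasure lborel {u \<in> (QQ :: (real^'n) set). Mcard 1 A u \<in> K} / ?V" for A
  proof -
    have PS: "Pair A -` S = {z. Mcard \<delta> A z \<in> K \<and> z \<in> ?C}" unfolding S_def by auto
    have Bb: "Pair A -` S \<in> sets borel" using sets_Pair1[OF Sb2] .
    have "emeasure ?\<mu>Z (Pair A -` S) = emeasure lborel (?U \<inter> Pair A -` S) / ?V"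
      unfolding dZ' using Ub Bb by (subst emeasure_uniform_measure) auto
    also have "?U \<inter> Pair A -` S = Pair A -` S" using UC PS by blast
    also have "emeasure lborel (Pair A -` S) = ?c * emeasure lborel ((\<lambda>u. grid_pt \<delta> m + \<delta> *\<^sub>R u) -` (Pair A -` S))"
      by (rule lborel_pre[OF \<delta> Bb])
    also have "(\<lambda>u. grid_pt \<delta> m + \<delta> *\<^sub>R u) -` (Pair A -` S) = {u \<in> (QQ :: (real^'n) set). Mcard 1 A u \<in> K}"
    proof (rule set_eqI)
      fix u :: "real^'n"
      show "u \<in> (\<lambda>u. grid_pt \<delta> m + \<delta> *\<^sub>R u) -` (Pair A -` S) \<longleftrightarrow> u \<in> {u \<in> (QQ :: (real^'n) set). Mcard 1 A u \<in> K}"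
        unfolding PS using cube_shift_iff[OF \<delta>, of m u] Mcard_conj[OF \<delta>, of A m u] by auto
    qed
    finally show ?thesis .
  qed
  define S' where "S' = {x :: (real^'n^'n) \<times> (real^'n). snd x \<in> QQ \<and> Mcard 1 (fst x) (snd x) \<in> K}"
  have S'b: "S' \<in> sets (?\<mu>L \<Otimes>\<^sub>M lborel)"
  proof -
    have "(\<lambda>x. Mcard 1 (fst x) (snd x)) -` K \<inter> space borel \<in> sets (borel :: ((real^'n^'n) \<times> (real^'n)) measure)"
      by (rule measurable_sets[OF Mcard_meas]) simp_all
    moreover have "snd -` QQ \<inter> space borel \<in> sets (borel :: ((real^'n^'n) \<times> (real^'n)) measure)"
      by (rule measurable_sets[OF snd_meas cube_sets])
    ultimately have "((\<lambda>x. Mcard 1 (fst x) (snd x)) -` K \<inter> space borel) \<inter> (snd -` QQ \<inter> space borel) \<in> sets (borel :: ((real^'n^'n) \<times> (real^'n)) measure)"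
      by (rule sets.Int)
    moreover have "((\<lambda>x. Mcard 1 (fst x) (snd x)) -` K \<inter> space borel) \<inter> (snd -` QQ \<inter> space borel) = S'"
      unfolding S'_def by auto
    moreover have "sets (?\<mu>L \<Otimes>\<^sub>M lborel) = sets (borel :: ((real^'n^'n) \<times> (real^'n)) measure)"
      using sets_prod_borel by (simp cong: sets_pair_measure_cong)
    ultimately show ?thesis by simp
  qed
  have fmeas: "(\<lambda>A. emeasure lborel {u \<in> (QQ :: (real^'n) set). Mcard 1 A u \<in> K}) \<in> borel_measurable ?\<mu>L"
  proof -
    have "(\<lambda>A. emeasure lborel (Pair A -` S')) \<in> borel_measurable ?\<mu>L"
      by (rule sigma_finite_measure.measurable_emeasure_Pair[OF sigma_finite_lborel S'b])
    moreover have "Pair A -` S' = {u \<in> (QQ :: (real^'n) set). Mcard 1 A u \<in> K}" for A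
      unfolding S'_def by auto
    ultimately show ?thesis by simp
  qed
  have "(\<lambda>x. (L x, Z x)) -` S \<inter> space M = {\<omega>\<in>space M. Mcard \<delta> (L \<omega>) (Z \<omega>) \<in> K \<and> Z \<omega> \<in> ?C}"
    unfolding S_def by auto
  then have "emeasure M {\<omega>\<in>space M. Mcard \<delta> (L \<omega>) (Z \<omega>) \<in> K \<and> Z \<omega> \<in> ?C}
      = emeasure (distr M (borel \<Otimes>\<^sub>M borel) (\<lambda>x. (L x, Z x))) S"
    using emeasure_distr[OF mLZ Sb2] by simp
  also have "\<dots> = emeasure (?\<mu>L \<Otimes>\<^sub>M ?\<mu>Z) S" using J by simp
  also have "\<dots> = (\<integral>\<^sup>+A. emeasure ?\<mu>Z (Pair A -` S) \<partial>?\<mu>L)"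
  proof (rule sigma_finite_measure.emeasure_pair_measure_alt[OF sfZ])
    have "sets (?\<mu>L \<Otimes>\<^sub>M ?\<mu>Z) = sets (borel \<Otimes>\<^sub>M borel)" by (simp cong: sets_pair_measure_cong)
    then show "S \<in> sets (?\<mu>L \<Otimes>\<^sub>M ?\<mu>Z)" using Sb2 by simp
  qed
  also have "\<dots> = (\<integral>\<^sup>+A. ?c * emeasure lborel {u \<in> (QQ :: (real^'n) set). Mcard 1 A u \<in> K} / ?V \<partial>?\<mu>L)"
    using fA by simp
  also have "\<dots> = (\<integral>\<^sup>+A. ?c * emeasure lborel {u \<in> (QQ :: (real^'n) set). Mcard 1 A u \<in> K} \<partial>?\<mu>L) / ?V"
    by (rule nn_integral_divide) (use fmeas in measurable)
  also have "\<dots> = ?c * rho L M K / ?V"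
    unfolding rho_def by (subst nn_integral_cmult[OF fmeas]) simp
  finally show ?thesis .
qed




lemma ediv:
  assumes "c > 0" "N > 0" "r \<ge> 0"
  shows "ennreal c * ennreal r / (of_nat N * ennreal c) = ennreal (r / real N)"
proof -
  have "ennreal c * ennreal r = ennreal (c * r)" using assms by (simp add: ennreal_mult)
  moreover have "of_nat N * ennreal c = ennreal (real N * c)"
    using assms by (simp add: ennreal_mult ennreal_of_nat_eq_real_of_nat)
  moreover have "ennreal (c * r) / ennreal (real N * c) = ennreal (c * r / (real N * c))"
    using assms by (intro divide_ennreal) auto
  moreover have "c * r / (real N * c) = r / real N" using assms by simp
  ultimately show ?thesis by simp
qed

lemma rho_UNIV:
  assumes "prob_space M" "L \<in> borel_measurable M"
  shows "rho L M UNIV = 1"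
proof -
  interpret X: prob_space "distr M borel L" by (rule prob_space.prob_space_distr[OF assms])
  have "rho L M UNIV = (\<integral>\<^sup>+A. 1 \<partial>(distr M borel L))"
  proof -
    have e: "{u \<in> (QQ :: (real^'n) set). Mcard 1 A u \<in> UNIV} = QQ" for A :: "real^'n^'n" by simp
    show ?thesis unfolding rho_def by (simp only: e QQ_measure)
  qed
  also have "\<dots> = 1" using X.emeasure_space_1 by simp
  finally show ?thesis .
qed

lemma rho_le:
  assumes "prob_space M" "L \<in> borel_measurable M"
  shows "rho L M K \<le> 1"
proof -
  have "rho L M K \<le> rho L M UNIV"
    unfolding rho_def
    by (intro nn_integral_mono emeasure_mono) (auto intro: cube_sets)
  then show ?thesis using rho_UNIV[OF assms] by simp
qed

lemma ev_meas:
  fixes L :: "'a \<Rightarrow> real^'n^'n" and Z :: "'a \<Rightarrow> real^'n"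
  assumes "\<delta> > 0" "L \<in> borel_measurable M" "Z \<in> borel_measurable M"
  shows "(\<lambda>\<omega>. Mcard \<delta> (L \<omega>) (Z \<omega>)) \<in> M \<rightarrow>\<^sub>M count_space UNIV"
proof -
  have "(\<lambda>\<omega>. (L \<omega>, Z \<omega>)) \<in> M \<rightarrow>\<^sub>M borel \<Otimes>\<^sub>M borel" by (rule measurable_Pair[OF assms(2,3)])
  then have p: "(\<lambda>\<omega>. (L \<omega>, Z \<omega>)) \<in> M \<rightarrow>\<^sub>M (borel :: ((real^'n^'n) \<times> (real^'n)) measure)"
    by (simp only: borel_prod)
  have "(\<lambda>x. Mcard \<delta> (fst x) (snd x)) \<circ> (\<lambda>\<omega>. (L \<omega>, Z \<omega>)) \<in> M \<rightarrow>\<^sub>M count_space UNIV"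
    by (rule measurable_comp[OF p Mcard_meas[OF assms(1)]])
  then show ?thesis by (simp add: comp_def)
qed




theorem theorem9:
  fixes M :: "'a measure"
    and N :: "real^'n \<Rightarrow> real"
    and L :: "'a \<Rightarrow> real^'n^'n"
    and X Y :: "'a \<Rightarrow> real^'n"
    and \<delta>1 \<delta>2 :: real
    and \<C>1 \<C>2 :: "(real^'n) set set"
    and m :: "int^'n"
  assumes "prob_space M"
    and "is_norm N"
    and "\<delta>1 > 0" and "\<delta>2 > 0"
    and "finite \<C>1" and "\<C>1 \<noteq> {}" and "\<C>1 \<subseteq> range (grid_cube \<delta>1)"
    and "finite \<C>2" and "\<C>2 \<noteq> {}" and "\<C>2 \<subseteq> range (grid_cube \<delta>2)"
    and "L \<in> borel_measurable M" and "X \<in> borel_measurable M" and "Y \<in> borel_measurable M"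
    and "prob_space.indep_set M {L -` A \<inter> space M | A. A \<in> sets borel}
                                {X -` B \<inter> space M | B. B \<in> sets borel}"
    and "prob_space.indep_set M {L -` A \<inter> space M | A. A \<in> sets borel}
                                {Y -` B \<inter> space M | B. B \<in> sets borel}"
    and "\<forall>\<omega>\<in>space M. op_norm N (L \<omega>) < 1"
    and "distr M lborel X = uniform_measure lborel (\<Union>\<C>1)"
    and "distr M lborel Y = uniform_measure lborel (\<Union>\<C>2)"
    and "grid_cube \<delta>1 m \<in> \<C>1"
  shows "\<forall>k::nat.
    measure M {\<omega>\<in>space M. Mcard \<delta>2 (L \<omega>) (Y \<omega>) = k}
    = measure M {\<omega>\<in>space M. Mcard \<delta>1 (L \<omega>) (X \<omega>) = k \<and> X \<omega> \<in> grid_cube \<delta>1 m}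
      / measure M {\<omega>\<in>space M. X \<omega> \<in> grid_cube \<delta>1 m}"
proof
  fix k :: nat
  interpret prob_space M by (rule assms(1))
  note P = assms(1)
  have d1: "\<delta>1 > 0" and d2: "\<delta>2 > 0" using assms by auto
  have mL: "L \<in> borel_measurable M" and mX: "X \<in> borel_measurable M" and mY: "Y \<in> borel_measurable M"
    using assms by auto
  let ?D = "DIM(real^'n)"
  define N1 where "N1 = card \<C>1"
  define N2 where "N2 = card \<C>2"
  have N1p: "N1 > 0" using assms(5,6) unfolding N1_def by (simp add: card_gt_0_iff)
  have N2p: "N2 > 0" using assms(8,9) unfolding N2_def by (simp add: card_gt_0_iff)
  have c1p: "\<delta>1 ^ ?D > 0" and c2p: "\<delta>2 ^ ?D > 0" using d1 d2 by simp_all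
  have V1: "emeasure lborel (\<Union>\<C>1) = of_nat N1 * ennreal (\<delta>1 ^ ?D)"
    unfolding N1_def using union_measure[OF d1 assms(5,7)] .
  have V2: "emeasure lborel (\<Union>\<C>2) = of_nat N2 * ennreal (\<delta>2 ^ ?D)"
    unfolding N2_def using union_measure[OF d2 assms(8,10)] .
  define r where "r = enn2real (rho L M {k})"
  have r0: "r \<ge> 0" unfolding r_def by simp
  have rr: "rho L M {k} = ennreal r"
  proof -
    have "rho L M {k} \<noteq> \<top>" using rho_le[OF P mL, of "{k}"] by (metis ennreal_one_neq_top top_unique)
    then show ?thesis unfolding r_def by (simp add: ennreal_enn2real_if)
  qed
  have r1: "rho L M UNIV = ennreal 1" using rho_UNIV[OF P mL] by simp

  have X1: "emeasure M {\<omega>\<in>space M. Mcard \<delta>1 (L \<omega>) (X \<omega>) \<in> {k} \<and> X \<omega> \<in> grid_cube \<delta>1 m} = ennreal (r / real N1)"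
    unfolding cube_prob[OF P d1 assms(5,7) mL mX assms(14,17,19)] V1 rr
    by (rule ediv[OF c1p N1p r0])
  have X0: "emeasure M {\<omega>\<in>space M. Mcard \<delta>1 (L \<omega>) (X \<omega>) \<in> UNIV \<and> X \<omega> \<in> grid_cube \<delta>1 m} = ennreal (1 / real N1)"
    unfolding cube_prob[OF P d1 assms(5,7) mL mX assms(14,17,19)] V1 r1
    by (rule ediv[OF c1p N1p]) simp
  have mX1: "measure M {\<omega>\<in>space M. Mcard \<delta>1 (L \<omega>) (X \<omega>) = k \<and> X \<omega> \<in> grid_cube \<delta>1 m} = r / real N1"
    using X1 r0 N1p by (simp add: measure_def)
  have mX0: "measure M {\<omega>\<in>space M. X \<omega> \<in> grid_cube \<delta>1 m} = 1 / real N1"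
    using X0 N1p by (simp add: measure_def)

  let ?U = "\<Union>\<C>2"
  let ?f = "\<lambda>\<omega>. Mcard \<delta>2 (L \<omega>) (Y \<omega>)"
  define F where "F C = {\<omega>\<in>space M. ?f \<omega> \<in> {k} \<and> Y \<omega> \<in> C}" for C
  have fm: "?f \<in> M \<rightarrow>\<^sub>M count_space UNIV" by (rule ev_meas[OF d2 mL mY])
  have fk: "?f -` {k} \<inter> space M \<in> sets M" by (rule measurable_sets[OF fm]) simp
  have FC: "emeasure M (F C) = ennreal (r / real N2)" if CC: "C \<in> \<C>2" for C
  proof -
    obtain m' where C: "C = grid_cube \<delta>2 m'" using CC assms(10) by blast
    show ?thesis
      unfolding F_def C cube_prob[OF P d2 assms(8,10) mL mY assms(15,18) CC[unfolded C]] V2 rr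
      by (rule ediv[OF c2p N2p r0])
  qed
  have Fs: "F C \<in> sets M" if "C \<in> \<C>2" for C
  proof -
    have "Y -` C \<inter> space M \<in> sets M"
      using that assms(10) cube_sets measurable_sets[OF mY] by blast
    then have "(?f -` {k} \<inter> space M) \<inter> (Y -` C \<inter> space M) \<in> sets M" using fk by blast
    moreover have "(?f -` {k} \<inter> space M) \<inter> (Y -` C \<inter> space M) = F C" unfolding F_def by auto
    ultimately show ?thesis by simp
  qed
  have disj: "disjoint_family_on F \<C>2"
    unfolding disjoint_family_on_def
  proof (intro ballI impI)
    fix C D assume CD: "C \<in> \<C>2" "D \<in> \<C>2" "C \<noteq> D"
    then obtain a b where "C = grid_cube \<delta>2 a" "D = grid_cube \<delta>2 b" using assms(10) by blast
    then have "C \<inter> D = {}" using cube_disjoint[OF d2] CD(3) by simp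
    then show "F C \<inter> F D = {}" unfolding F_def by blast
  qed
  have "(\<Sum>C\<in>\<C>2. emeasure M (F C)) = emeasure M (\<Union>C\<in>\<C>2. F C)"
    by (rule sum_emeasure) (use Fs disj assms(8) in auto)
  moreover have "(\<Sum>C\<in>\<C>2. emeasure M (F C)) = ennreal r"
  proof -
    have "(\<Sum>C\<in>\<C>2. emeasure M (F C)) = (\<Sum>C\<in>\<C>2. ennreal (r / real N2))"
      using FC by simp
    also have "\<dots> = of_nat N2 * ennreal (r / real N2)" unfolding N2_def by simp
    also have "\<dots> = ennreal r"
      using N2p r0 by (simp add: ennreal_of_nat_eq_real_of_nat ennreal_mult[symmetric])
    finally show ?thesis .
  qed
  ultimately have UF: "emeasure M (\<Union>C\<in>\<C>2. F C) = ennreal r" by simp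
  define B where "B = {\<omega>\<in>space M. ?f \<omega> = k \<and> Y \<omega> \<notin> ?U}"
  have Ub: "?U \<in> sets lborel"
    using assms(8,10) cube_sets by (intro sets.finite_Union) auto
  have N0: "emeasure M (Y -` (- ?U) \<inter> space M) = 0"
  proof -
    have mY': "Y \<in> M \<rightarrow>\<^sub>M lborel" using mY by simp
    have "emeasure M (Y -` (- ?U) \<inter> space M) = emeasure (distr M lborel Y) (- ?U)"
      using Ub by (subst emeasure_distr[OF mY']) auto
    also have "\<dots> = emeasure lborel (?U \<inter> - ?U) / emeasure lborel ?U"
      unfolding assms(18) using Ub by (subst emeasure_uniform_measure) auto
    finally show ?thesis by simp
  qed
  have N0s: "Y -` (- ?U) \<inter> space M \<in> sets M"
    using Ub measurable_sets[OF mY, of "- ?U"] by auto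
  have Bs: "B \<in> sets M"
  proof -
    have "(?f -` {k} \<inter> space M) \<inter> (Y -` (- ?U) \<inter> space M) \<in> sets M" using fk N0s by blast
    moreover have "(?f -` {k} \<inter> space M) \<inter> (Y -` (- ?U) \<inter> space M) = B" unfolding B_def by auto
    ultimately show ?thesis by simp
  qed
  have Bnull: "B \<in> null_sets M"
  proof (rule null_setsI[OF _ Bs])
    have "B \<subseteq> Y -` (- ?U) \<inter> space M" unfolding B_def by auto
    then have "emeasure M B \<le> 0" using emeasure_mono[OF _ N0s] N0 by metis
    then show "emeasure M B = 0" by simp
  qed
  have split: "{\<omega>\<in>space M. ?f \<omega> = k} = (\<Union>C\<in>\<C>2. F C) \<union> B"
    unfolding F_def B_def by auto
  have UFs: "(\<Union>C\<in>\<C>2. F C) \<in> sets M" using Fs assms(8) by (intro sets.finite_UN) auto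
  have "emeasure M {\<omega>\<in>space M. ?f \<omega> = k} = ennreal r"
    unfolding split emeasure_Un_null_set[OF UFs Bnull] UF ..
  then have mY1: "measure M {\<omega>\<in>space M. ?f \<omega> = k} = r"
    using r0 by (simp add: measure_def)
  show "measure M {\<omega>\<in>space M. Mcard \<delta>2 (L \<omega>) (Y \<omega>) = k}
    = measure M {\<omega>\<in>space M. Mcard \<delta>1 (L \<omega>) (X \<omega>) = k \<and> X \<omega> \<in> grid_cube \<delta>1 m}
      / measure M {\<omega>\<in>space M. X \<omega> \<in> grid_cube \<delta>1 m}"
    unfolding mY1 mX1 mX0 using N1p by simp
qed


end
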